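(* Let $N\ge2$, $\alpha\in(0,\infty)^{N+1}$ and $\tilde\alpha=\sum_{n=1}^N\alpha_n$. For every $d\in\mathbb Z_+$, $$\tilde\Lambda_{d+1}=(2d+\tilde\alpha+\tilde\Lambda_d)\cup\{0[C(N,d+1)-C(N,d)]\}$$ as multisets, where $C(N,d)=\binom{d+N-1}{d}$.
   Context: $\mathscr H_d$ is the space of homogeneous polynomials of total degree $d$ in $x_1,\dots,x_N$ (so $\dim\mathscr H_d=C(N,d)$). Let $\tilde L=\sum_{n=1}^N(x_n\partial_n^2+\alpha_n\partial_n)$, which maps $\mathscr H_d$ into $\mathscr H_{d-1}$, and $|x|_1=\sum_{n=1}^Nx_n$. $\tilde\Lambda_d$ is the spectrum, as a multiset (eigenvalues with multiplicities), of the operator $\psi\mapsto|x|_1\tilde L\psi$ on $\mathscr H_d$. For a multiset $S$ and $c\in\mathbb R$, $c+S$ denotes the multiset $\{c+s:s\in S\}$; $\{0[l]\}$ denotes $0$ repeated $l$ times; $\cup$ is multiset union. *)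

theory Defs
  imports "Jordan_Normal_Form.Char_Poly" "HOL-Computational_Algebra.Polynomial"
begin

text \<open>Polynomials in x_1,...,x_N are represented by their coefficient maps:
  an exponent vector is a function a :: nat => nat (a n = exponent of x_n,
  only n in {1..N} used), and a polynomial is a map from exponent vectors to
  real coefficients.\<close>

type_synonym expo = "nat \<Rightarrow> nat"
type_synonym cpoly = "expo \<Rightarrow> real"

definition mono_set :: "nat \<Rightarrow> nat \<Rightarrow> expo set" where
  "mono_set N d = {a. (\<forall>n. n \<notin> {1..N} \<longrightarrow> a n = 0) \<and> (\<Sum>n=1..N. a n) = d}"

definition pderiv_n :: "nat \<Rightarrow> cpoly \<Rightarrow> cpoly" where
  "pderiv_n n p = (\<lambda>a. real (a n + 1) * p (a(n := a n + 1)))"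

definition mulx :: "nat \<Rightarrow> cpoly \<Rightarrow> cpoly" where
  "mulx n p = (\<lambda>a. if a n = 0 then 0 else p (a(n := a n - 1)))"

definition Ltilde :: "nat \<Rightarrow> (nat \<Rightarrow> real) \<Rightarrow> cpoly \<Rightarrow> cpoly" where
  "Ltilde N \<alpha> p = (\<lambda>a. \<Sum>n=1..N. mulx n (pderiv_n n (pderiv_n n p)) a + \<alpha> n * pderiv_n n p a)"

definition mul_abs1 :: "nat \<Rightarrow> cpoly \<Rightarrow> cpoly" where
  "mul_abs1 N p = (\<lambda>a. \<Sum>n=1..N. mulx n p a)"

definition monomial_c :: "expo \<Rightarrow> cpoly" where
  "monomial_c b = (\<lambda>a. if a = b then 1 else 0)"

definition mono_list :: "nat \<Rightarrow> nat \<Rightarrow> expo list" where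
  "mono_list N d = (SOME xs. distinct xs \<and> set xs = mono_set N d)"

definition op_matrix :: "nat \<Rightarrow> (nat \<Rightarrow> real) \<Rightarrow> nat \<Rightarrow> real mat" where
  "op_matrix N \<alpha> d =
     (let ms = mono_list N d in
      mat (length ms) (length ms)
        (\<lambda>(i, j). mul_abs1 N (Ltilde N \<alpha> (monomial_c (ms ! j))) (ms ! i)))"

definition Lambda_tilde :: "nat \<Rightarrow> (nat \<Rightarrow> real) \<Rightarrow> nat \<Rightarrow> complex multiset" where
  "Lambda_tilde N \<alpha> d = proots (char_poly (map_mat complex_of_real (op_matrix N \<alpha> d)))"

definition Cdim :: "nat \<Rightarrow> nat \<Rightarrow> nat" where
  "Cdim N d = (d + N - 1) choose d"

end

theory Submission imports Defs "Jordan_Normal_Form.Schur_Decomposition" begin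


lemma char_poly_zero_mat: "char_poly (0\<^sub>m n n :: 'a::comm_ring_1 mat) = [:0,1:]^n"
proof -
  have "char_poly (0\<^sub>m n n :: 'a mat) = (\<Prod> a \<leftarrow> diag_mat (0\<^sub>m n n :: 'a mat). [:- a, 1:])"
    by (rule char_poly_upper_triangular[of _ n]) (auto simp: upper_triangular_def)
  also have "diag_mat (0\<^sub>m n n :: 'a mat) = replicate n 0"
    by (auto simp: diag_mat_def list_eq_iff_nth_eq)
  finally show ?thesis by (simp add: prod_list_replicate)
qed

lemma sylvester:
  fixes A B :: "complex mat"
  assumes A: "A \<in> carrier_mat p q" and B: "B \<in> carrier_mat q p"
  shows "char_poly (A*B) * [:0,1:]^q = [:0,1:]^p * char_poly (B*A)"
proof -
  define X where "X = four_block_mat (A*B) (0\<^sub>m p q) B (0\<^sub>m q q)"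
  define Y where "Y = four_block_mat (0\<^sub>m p p) (0\<^sub>m p q) B (B*A)"
  define P where "P = four_block_mat (1\<^sub>m p) A (0\<^sub>m q p) (1\<^sub>m q)"
  define Q where "Q = four_block_mat (1\<^sub>m p) (-A) (0\<^sub>m q p) (1\<^sub>m q)"
  have AB: "A*B \<in> carrier_mat p p" and BA: "B*A \<in> carrier_mat q q" using A B by auto
  have Xc: "X \<in> carrier_mat (p+q) (p+q)" unfolding X_def using AB B by auto
  have Yc: "Y \<in> carrier_mat (p+q) (p+q)" unfolding Y_def using BA B by auto
  have Pc: "P \<in> carrier_mat (p+q) (p+q)" unfolding P_def using A by auto
  have Qc: "Q \<in> carrier_mat (p+q) (p+q)" unfolding Q_def using A by auto
  have z1: "- 0\<^sub>m q q + 1\<^sub>m q = (1\<^sub>m q :: complex mat)" by (rule eq_matI) auto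
  have z2: "A + - A = 0\<^sub>m p q" using A by (intro eq_matI) auto
  have PQ: "P * Q = 1\<^sub>m (p+q)"
    unfolding P_def Q_def
    by (subst mult_four_block_mat[of _ p p _ q _ q], insert A, auto simp: z1 z2)
  have QP: "Q * P = 1\<^sub>m (p+q)"
    unfolding P_def Q_def
    by (subst mult_four_block_mat[of _ p p _ q _ q], insert A, auto simp: z1 z2)
  have XP: "X * P = P * Y"
    unfolding P_def X_def Y_def
    apply (subst mult_four_block_mat[of _ p p _ q _ q], insert A B, auto)
    apply (subst mult_four_block_mat[of _ p p _ q _ q], insert A B, auto simp: assoc_mult_mat[of _ p q _ p _ q])
    done
  have "X = P * Y * Q"
  proof -
    have "X = X * P * Q" using PQ Xc Pc Qc by (simp add: assoc_mult_mat[of _ "p+q" "p+q"])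
    thus ?thesis using XP by simp
  qed
  hence "similar_mat_wit X Y P Q" unfolding similar_mat_wit_def
    using Xc Yc Pc Qc PQ QP by (simp add: Let_def)
  hence sim: "similar_mat X Y" unfolding similar_mat_def by blast
  have lin: "\<And>M n. (M::complex mat) \<in> carrier_mat n n \<Longrightarrow> \<exists>es. char_poly M = (\<Prod> a \<leftarrow> es. [:- a, 1:])"
    using char_poly_factorized by blast
  have "char_poly X = char_poly (A*B) * char_poly (0\<^sub>m q q :: complex mat)"
    by (rule char_poly_0_block'[OF X_def lin[OF AB] lin[OF zero_carrier_mat] AB B zero_carrier_mat])
  moreover have "char_poly Y = char_poly (0\<^sub>m p p :: complex mat) * char_poly (B*A)"
    by (rule char_poly_0_block'[OF Y_def lin[OF zero_carrier_mat] lin[OF BA] zero_carrier_mat B BA])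
  moreover have "char_poly X = char_poly Y" by (rule char_poly_similar[OF sim])
  ultimately show ?thesis by (simp add: char_poly_zero_mat)
qed


lemma proots_lin_list: "proots (\<Prod> a \<leftarrow> as. [:- a, 1:]) = mset (as :: 'a::idom list)"
proof (induction as)
  case (Cons a as)
  have nz: "(\<Prod> a \<leftarrow> as. [:- a, 1:]) \<noteq> (0 :: 'a poly)"
    by (subst prod_list_zero_iff) auto
  have eq: "(\<Prod> a \<leftarrow> a # as. [:- a, 1:]) = [:-a,1:] * (\<Prod> a \<leftarrow> as. [:- a, 1:])" by simp
  have "proots (\<Prod> a \<leftarrow> a # as. [:- a, 1:]) = proots [:-a,1:] + proots (\<Prod> a \<leftarrow> as. [:- a, 1:])"
    unfolding eq by (rule proots_mult) (use nz in auto)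
  also have "proots [:-a, 1:] = {#a#}" using proots_linear_factor[of "-a"] by simp
  finally show ?case using Cons by simp
qed simp

lemma char_poly_shift:
  fixes T :: "'a::comm_ring_1 mat"
  assumes T: "T \<in> carrier_mat n n"
  shows "char_poly (T + c \<cdot>\<^sub>m 1\<^sub>m n) = pcompose (char_poly T) [:-c,1:]"
proof -
  have hh: "comm_ring_hom (\<lambda>p. pcompose p [:-c,1:])"
    by unfold_locales (auto simp: pcompose_add pcompose_mult pcompose_1)
  have "char_poly_matrix (T + c \<cdot>\<^sub>m 1\<^sub>m n) = map_mat (\<lambda>p. pcompose p [:-c,1:]) (char_poly_matrix T)"
    using T by (intro eq_matI) (auto simp: char_poly_matrix_def pcompose_pCons)
  thus ?thesis unfolding char_poly_def using comm_ring_hom.hom_det[OF hh, of "char_poly_matrix T"] by simp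
qed

lemma proots_char_poly_shift:
  fixes T :: "complex mat"
  assumes T: "T \<in> carrier_mat n n"
  shows "proots (char_poly (T + c \<cdot>\<^sub>m 1\<^sub>m n)) = image_mset (\<lambda>s. c + s) (proots (char_poly T))"
proof -
  obtain as where as: "char_poly T = (\<Prod> a \<leftarrow> as. [:- a, 1:])"
    using char_poly_factorized[OF T] by blast
  have "pcompose (\<Prod> a \<leftarrow> as. [:- a, 1:]) [:-c,1:] = (\<Prod> a \<leftarrow> map (\<lambda>s. c + s) as. [:- a, 1:])"
  proof (induction as)
    case (Cons a as)
    have l: "pcompose [:-a,1:] [:-c,1:] = [:-(c+a),1:]" by (simp add: pcompose_pCons)
    show ?case by (simp only: list.map prod_list.Cons pcompose_mult l Cons)
  qed (simp add: pcompose_1)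
  thus ?thesis unfolding char_poly_shift[OF T] as proots_lin_list using proots_lin_list[of "map (\<lambda>s. c + s) as"] by (simp only: mset_map)
qed


lemma pd_add: "pderiv_n n (\<lambda>a. f a + g a) = (\<lambda>a. pderiv_n n f a + pderiv_n n g a)"
  by (simp add: pderiv_n_def algebra_simps)
lemma pd_sum: "pderiv_n n (\<lambda>a. \<Sum>m\<in>M. f m a) = (\<lambda>a. \<Sum>m\<in>M. pderiv_n n (f m) a)"
  by (simp add: pderiv_n_def sum_distrib_left)
lemma pd_scal: "pderiv_n n (\<lambda>a. c * f a) = (\<lambda>a. c * pderiv_n n f a)"
  by (simp add: pderiv_n_def algebra_simps)
lemma mx_add: "mulx n (\<lambda>a. f a + g a) = (\<lambda>a. mulx n f a + mulx n g a)"
  by (simp add: mulx_def fun_eq_iff)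
lemma mx_sum: "mulx n (\<lambda>a. \<Sum>m\<in>M. f m a) = (\<lambda>a. \<Sum>m\<in>M. mulx n (f m) a)"
  by (simp add: mulx_def fun_eq_iff)
lemma mx_scal: "mulx n (\<lambda>a. c * f a) = (\<lambda>a. c * mulx n f a)"
  by (simp add: mulx_def fun_eq_iff)

lemma mx_comm: "mulx n (mulx m p) = mulx m (mulx n p)"
  by (cases "m = n") (auto simp: mulx_def fun_eq_iff fun_upd_twist)

lemma C1: "m \<noteq> n \<Longrightarrow> pderiv_n n (mulx m p) = mulx m (pderiv_n n p)"
  by (auto simp: mulx_def pderiv_n_def fun_eq_iff fun_upd_twist)

lemma C2: "pderiv_n n (mulx n p) = (\<lambda>a. mulx n (pderiv_n n p) a + p a)"
proof
  fix a
  show "pderiv_n n (mulx n p) a = mulx n (pderiv_n n p) a + p a"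
  proof (cases "a n = 0")
    case True thus ?thesis by (simp add: mulx_def pderiv_n_def)
  next
    case False
    hence "real (a n - 1 + 1) = real (a n)" by simp
    thus ?thesis using False by (simp add: mulx_def pderiv_n_def algebra_simps)
  qed
qed

lemma C3: "mulx n (pderiv_n n p) a = real (a n) * p a"
proof (cases "a n = 0")
  case True thus ?thesis by (simp add: mulx_def pderiv_n_def)
next
  case False
  hence "real (a n - 1 + 1) = real (a n)" by simp
  thus ?thesis using False by (simp add: mulx_def pderiv_n_def)
qed

lemma step1:
  assumes n: "n \<in> {1..N}"
  shows "pderiv_n n (mul_abs1 N p) = (\<lambda>a. mul_abs1 N (pderiv_n n p) a + p a)"
proof -
  have "pderiv_n n (mul_abs1 N p) = (\<lambda>a. \<Sum>m\<in>{1..N}. pderiv_n n (mulx m p) a)"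
    unfolding mul_abs1_def by (rule pd_sum)
  also have "\<dots> = (\<lambda>a. \<Sum>m\<in>{1..N}. mulx m (pderiv_n n p) a + (if m = n then p a else 0))"
    by (intro ext sum.cong refl) (auto simp: C1 C2)
  also have "\<dots> = (\<lambda>a. mul_abs1 N (pderiv_n n p) a + p a)"
    using n by (simp add: sum.distrib mul_abs1_def)
  finally show ?thesis .
qed

lemma commutator:
  "Ltilde N \<alpha> (mul_abs1 N p) a =
     mul_abs1 N (Ltilde N \<alpha> p) a + (2 * (\<Sum>n=1..N. real (a n)) + (\<Sum>n=1..N. \<alpha> n)) * p a"
proof -
  define q where "q n = pderiv_n n p" for n
  define r where "r n = pderiv_n n (q n)" for n
  have s2: "mulx n (pderiv_n n (pderiv_n n (mul_abs1 N p))) a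
      = mul_abs1 N (mulx n (r n)) a + 2 * (real (a n) * p a)" if n: "n \<in> {1..N}" for n
  proof -
    have "pderiv_n n (pderiv_n n (mul_abs1 N p)) = (\<lambda>a. mul_abs1 N (r n) a + q n a + q n a)"
      unfolding step1[OF n] pd_add step1[OF n] q_def r_def by (simp add: pd_add)
    hence "mulx n (pderiv_n n (pderiv_n n (mul_abs1 N p))) a
        = mulx n (mul_abs1 N (r n)) a + mulx n (q n) a + mulx n (q n) a"
      by (simp add: mx_add mx_scal)
    also have "mulx n (mul_abs1 N (r n)) = mul_abs1 N (mulx n (r n))"
      unfolding mul_abs1_def mx_sum by (simp add: mx_comm)
    finally show ?thesis unfolding q_def C3 by simp
  qed
  have "Ltilde N \<alpha> (mul_abs1 N p) a = (\<Sum>n=1..N. mul_abs1 N (mulx n (r n)) a + 2 * (real (a n) * p a)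
        + \<alpha> n * (mul_abs1 N (q n) a + p a))"
    unfolding Ltilde_def
  proof (intro sum.cong refl)
    fix n assume n: "n \<in> {1..N}"
    show "mulx n (pderiv_n n (pderiv_n n (mul_abs1 N p))) a + \<alpha> n * pderiv_n n (mul_abs1 N p) a =
      mul_abs1 N (mulx n (r n)) a + 2 * (real (a n) * p a) + \<alpha> n * (mul_abs1 N (q n) a + p a)"
      by (subst s2[OF n]) (simp add: step1[OF n] q_def)
  qed
  also have "\<dots> = (\<Sum>n=1..N. mul_abs1 N (mulx n (r n)) a + \<alpha> n * mul_abs1 N (q n) a)
        + (2 * (\<Sum>n=1..N. real (a n)) + (\<Sum>n=1..N. \<alpha> n)) * p a"
    by (simp add: sum.distrib algebra_simps sum_distrib_left sum_distrib_right)
  also have "(\<Sum>n=1..N. mul_abs1 N (mulx n (r n)) a + \<alpha> n * mul_abs1 N (q n) a) = mul_abs1 N (Ltilde N \<alpha> p) a"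
  proof -
    have "mul_abs1 N (Ltilde N \<alpha> p) a = (\<Sum>m=1..N. \<Sum>n=1..N. mulx m (mulx n (r n)) a + \<alpha> n * mulx m (q n) a)"
      unfolding mul_abs1_def Ltilde_def mx_sum mx_add mx_scal r_def q_def by simp
    also have "\<dots> = (\<Sum>n=1..N. \<Sum>m=1..N. mulx m (mulx n (r n)) a + \<alpha> n * mulx m (q n) a)"
      by (rule sum.swap)
    also have "\<dots> = (\<Sum>n=1..N. mul_abs1 N (mulx n (r n)) a + \<alpha> n * mul_abs1 N (q n) a)"
      by (simp add: mul_abs1_def sum.distrib sum_distrib_left)
    finally show ?thesis by simp
  qed
  finally show ?thesis .
qed


definition supp_in :: "cpoly \<Rightarrow> expo set \<Rightarrow> bool" where
  "supp_in p S = (\<forall>a. p a \<noteq> 0 \<longrightarrow> a \<in> S)"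

lemma expand:
  assumes "finite S" "supp_in p S"
  shows "p = (\<lambda>a. \<Sum>c\<in>S. p c * monomial_c c a)"
proof
  fix a
  show "p a = (\<Sum>c\<in>S. p c * monomial_c c a)"
  proof (cases "a \<in> S")
    case True
    have "(\<Sum>c\<in>S. p c * monomial_c c a) = (\<Sum>c\<in>S. if c = a then p c else 0)"
      by (intro sum.cong refl) (auto simp: monomial_c_def)
    thus ?thesis using True assms(1) by simp
  next
    case False
    hence "p a = 0" using assms(2) unfolding supp_in_def by blast
    moreover have "(\<Sum>c\<in>S. p c * monomial_c c a) = 0"
      using False by (intro sum.neutral) (auto simp: monomial_c_def)
    ultimately show ?thesis by simp
  qed
qed

lemma lin_M: "mul_abs1 N (\<lambda>a. \<Sum>c\<in>S. f c * g c a) b = (\<Sum>c\<in>S. f c * mul_abs1 N (g c) b)"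
  unfolding mul_abs1_def mx_sum mx_scal by (simp add: sum_distrib_left, rule sum.swap)

lemma lin_L: "Ltilde N \<alpha> (\<lambda>a. \<Sum>c\<in>S. f c * g c a) b = (\<Sum>c\<in>S. f c * Ltilde N \<alpha> (g c) b)"
  unfolding Ltilde_def pd_sum pd_scal mx_sum mx_scal
  by (simp add: sum_distrib_left sum.distrib algebra_simps) (simp only: sum.swap[of _ "{Suc 0..N}" S])

lemma sum_upd:
  assumes "finite A" "n \<in> A"
  shows "sum (a(n:=x)) A + a n = sum a A + (x::nat)"
proof -
  have "sum (a(n:=x)) A = x + sum (a(n:=x)) (A - {n})" using assms by (simp add: sum.remove)
  also have "sum (a(n:=x)) (A - {n}) = sum a (A - {n})" by (intro sum.cong) auto
  finally show ?thesis using assms by (simp add: sum.remove)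
qed

lemma pd_homog:
  assumes n: "n \<in> {1..N}" and h: "supp_in p (mono_set N (Suc k))"
  shows "supp_in (pderiv_n n p) (mono_set N k)"
  unfolding supp_in_def
proof (intro allI impI)
  fix a assume "pderiv_n n p a \<noteq> 0"
  hence "p (a(n := a n + 1)) \<noteq> 0" by (simp add: pderiv_n_def)
  hence m: "a(n := a n + 1) \<in> mono_set N (Suc k)" using h unfolding supp_in_def by blast
  have "sum (a(n := a n + 1)) {1..N} + a n = sum a {1..N} + (a n + 1)" by (rule sum_upd) (use n in auto)
  thus "a \<in> mono_set N k" using m n unfolding mono_set_def by (auto split: if_splits)
qed

lemma pd_homog0:
  assumes n: "n \<in> {1..N}" and h: "supp_in p (mono_set N 0)"
  shows "pderiv_n n p = (\<lambda>_. 0)"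
proof
  fix a :: expo
  have "sum (a(n := a n + 1)) {1..N} + a n = sum a {1..N} + (a n + 1)" by (rule sum_upd) (use n in auto)
  hence "a(n := a n + 1) \<notin> mono_set N 0" unfolding mono_set_def by auto
  hence "p (a(n := a n + 1)) = 0" using h unfolding supp_in_def by blast
  thus "pderiv_n n p a = 0" by (simp add: pderiv_n_def)
qed

lemma mx_homog:
  assumes n: "n \<in> {1..N}" and h: "supp_in p (mono_set N k)"
  shows "supp_in (mulx n p) (mono_set N (Suc k))"
  unfolding supp_in_def
proof (intro allI impI)
  fix a assume "mulx n p a \<noteq> 0"
  hence an: "a n \<noteq> 0" and "p (a(n := a n - 1)) \<noteq> 0" by (auto simp: mulx_def split: if_splits)
  hence m: "a(n := a n - 1) \<in> mono_set N k" using h unfolding supp_in_def by blast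
  have "sum (a(n := a n - 1)) {1..N} + a n = sum a {1..N} + (a n - 1)" by (rule sum_upd) (use n in auto)
  thus "a \<in> mono_set N (Suc k)" using m n an unfolding mono_set_def by (auto split: if_splits)
qed

lemma supp_sum: "finite I \<Longrightarrow> (\<And>i. i \<in> I \<Longrightarrow> supp_in (f i) S) \<Longrightarrow> supp_in (\<lambda>a. \<Sum>i\<in>I. f i a) S"
  unfolding supp_in_def by (metis (mono_tags, lifting) sum.neutral)

lemma supp_add: "supp_in f S \<Longrightarrow> supp_in g S \<Longrightarrow> supp_in (\<lambda>a. f a + g a) S"
  unfolding supp_in_def by (metis add.right_neutral)
lemma supp_scal: "supp_in f S \<Longrightarrow> supp_in (\<lambda>a. c * f a) S"
  unfolding supp_in_def by auto
lemma supp_zero: "supp_in (\<lambda>_. 0) S"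
  unfolding supp_in_def by auto

lemma mx_zero: "mulx n (\<lambda>_. 0) = (\<lambda>_. 0)" by (simp add: mulx_def fun_eq_iff)

lemma L_homog:
  assumes h: "supp_in p (mono_set N (Suc k))"
  shows "supp_in (Ltilde N \<alpha> p) (mono_set N k)"
  unfolding Ltilde_def
proof (rule supp_sum[OF finite_atLeastAtMost], rule supp_add)
  fix n assume n: "n \<in> {1..N}"
  show "supp_in (\<lambda>a. \<alpha> n * pderiv_n n p a) (mono_set N k)"
    by (rule supp_scal, rule pd_homog[OF n h])
  show "supp_in (mulx n (pderiv_n n (pderiv_n n p))) (mono_set N k)"
  proof (cases k)
    case 0
    thus ?thesis using pd_homog0[OF n pd_homog[OF n h[unfolded 0]]] by (simp add: mx_zero supp_zero)
  next
    case (Suc j)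
    show ?thesis unfolding Suc
      by (rule mx_homog[OF n pd_homog[OF n pd_homog[OF n h[unfolded Suc]]]])
  qed
qed

lemma M_homog:
  assumes h: "supp_in p (mono_set N k)"
  shows "supp_in (mul_abs1 N p) (mono_set N (Suc k))"
  unfolding mul_abs1_def by (rule supp_sum[OF finite_atLeastAtMost], rule mx_homog[OF _ h])

lemma mono_homog: "b \<in> S \<Longrightarrow> supp_in (monomial_c b) S"
  unfolding supp_in_def monomial_c_def by auto


lemma sum_map_upt: "sum_list (map (a::nat\<Rightarrow>nat) [1..<N+1]) = (\<Sum>n=1..N. a n)"
proof -
  have "sum_list (map a [1..<N+1]) = sum a (set [1..<N+1])"
    by (rule sum_set_upt_conv_sum_list_nat[symmetric])
  also have "set [1..<N+1] = {1..N}" by auto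
  finally show ?thesis .
qed

lemma sum_map_upt': "sum_list (map (a::nat\<Rightarrow>nat) [Suc 0..<Suc N]) = sum a {Suc 0..N}"
  using sum_map_upt[of a N] by simp

lemma mono_bij: "bij_betw (\<lambda>a. map a [1..<N+1]) (mono_set N d) {l. length l = N \<and> sum_list l = d}"
proof (rule bij_betw_byWitness[where f' = "\<lambda>l n. if n \<in> {1..N} then l!(n-1) else 0"])
  show "\<forall>a\<in>mono_set N d. (\<lambda>n. if n \<in> {1..N} then map a [1..<N+1] ! (n - 1) else 0) = a"
    by (auto simp: mono_set_def fun_eq_iff nth_map simp del: upt_Suc)
  have fg: "map (\<lambda>n. if n \<in> {1..N} then l!(n-1) else 0) [1..<N+1] = l" if "length l = N" for l :: "nat list"
    using that by (auto simp: list_eq_iff_nth_eq simp del: upt_Suc)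
  thus "\<forall>l\<in>{l. length l = N \<and> sum_list l = d}. map (\<lambda>n. if n \<in> {1..N} then l!(n-1) else 0) [1..<N+1] = l"
    by auto
  show "(\<lambda>a. map a [1..<N+1]) ` mono_set N d \<subseteq> {l. length l = N \<and> sum_list l = d}"
    by (auto simp: mono_set_def sum_map_upt' simp del: upt_Suc)
  show "(\<lambda>l n. if n \<in> {1..N} then l!(n-1) else 0) ` {l. length l = N \<and> sum_list l = d} \<subseteq> mono_set N d"
  proof
    fix a assume "a \<in> (\<lambda>l n. if n \<in> {1..N} then l!(n-1) else 0) ` {l. length l = N \<and> sum_list l = d}"
    then obtain l where l: "length l = N" "sum_list l = d" and a: "a = (\<lambda>n. if n \<in> {1..N} then l!(n-1) else 0)"
      by auto
    have "(\<Sum>n=1..N. a n) = sum_list (map a [1..<N+1])" by (rule sum_map_upt[symmetric])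
    also have "map a [1..<N+1] = l" unfolding a by (rule fg[OF l(1)])
    finally show "a \<in> mono_set N d" using l a unfolding mono_set_def by auto
  qed
qed

lemma fin_lists: "finite {l. length l = N \<and> sum_list l = (d::nat)}"
proof (rule finite_subset)
  show "{l. length l = N \<and> sum_list l = d} \<subseteq> {l. set l \<subseteq> {0..d} \<and> length l = N}"
    using member_le_sum_list by fastforce
  show "finite {l. set l \<subseteq> {0..d} \<and> length l = N}" by (rule finite_lists_length_eq) simp
qed

lemma fin_mono: "finite (mono_set N d)"
  using bij_betw_finite[OF mono_bij] fin_lists by blast

lemma card_mono: "card (mono_set N d) = Cdim N d"
  using bij_betw_same_card[OF mono_bij, of N d] card_length_sum_list[of N d] unfolding Cdim_def by simp

lemma mono_list_props: "distinct (mono_list N d) \<and> set (mono_list N d) = mono_set N d"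
  unfolding mono_list_def by (rule someI_ex) (use finite_distinct_list[OF fin_mono] in metis)

lemma length_mono_list: "length (mono_list N d) = Cdim N d"
  using mono_list_props[of N d] card_mono[of N d] distinct_card by metis

lemma Cdim_mono: "N \<ge> 1 \<Longrightarrow> Cdim N d \<le> Cdim N (d+1)"
proof -
  assume "N \<ge> 1"
  hence e: "d + 1 + N - 1 = Suc (d + N - 1)" by simp
  have "(d + N - 1 choose d) \<le> Suc (d + N - 1) choose Suc d" by simp
  thus ?thesis unfolding Cdim_def e by simp
qed


lemma sum_set_nth: "distinct xs \<Longrightarrow> sum f (set xs) = (\<Sum>k\<in>{0..<length xs}. f (xs!k))"
  by (simp add: sum.distinct_set_conv_list sum_list_sum_nth)

lemma replicate_mset_add: "replicate_mset (a + b) x = replicate_mset a x + replicate_mset b x"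
  by (induction a) auto

theorem proposition4p1:
  fixes N :: nat and \<alpha> :: "nat \<Rightarrow> real" and d :: nat
  assumes "N \<ge> 2"
    and "\<forall>n \<in> {0..N}. \<alpha> n > 0"
  shows "Lambda_tilde N \<alpha> (d + 1) =
           image_mset (\<lambda>s. complex_of_real (2 * real d + (\<Sum>n=1..N. \<alpha> n)) + s) (Lambda_tilde N \<alpha> d)
           + replicate_mset (Cdim N (d + 1) - Cdim N d) 0"
proof -
  define cs where "cs = mono_list N d"
  define bs where "bs = mono_list N (d+1)"
  define q where "q = length cs"
  define p where "p = length bs"
  define c where "c = 2 * real d + (\<Sum>n=1..N. \<alpha> n)"
  have cs: "distinct cs" "set cs = mono_set N d" using mono_list_props unfolding cs_def by auto
  have bs: "distinct bs" "set bs = mono_set N (Suc d)" using mono_list_props unfolding bs_def by auto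
  have qC: "q = Cdim N d" unfolding q_def cs_def by (rule length_mono_list)
  have pC: "p = Cdim N (d+1)" unfolding p_def bs_def by (rule length_mono_list)
  have pq: "q \<le> p" unfolding qC pC by (rule Cdim_mono) (use assms(1) in auto)
  define A where "A = mat p q (\<lambda>(i,k). mul_abs1 N (monomial_c (cs!k)) (bs!i))"
  define B where "B = mat q p (\<lambda>(k,j). Ltilde N \<alpha> (monomial_c (bs!j)) (cs!k))"
  have Ac: "A \<in> carrier_mat p q" and Bc: "B \<in> carrier_mat q p" unfolding A_def B_def by auto
  have opd: "op_matrix N \<alpha> d = mat q q (\<lambda>(i, j). mul_abs1 N (Ltilde N \<alpha> (monomial_c (cs ! j))) (cs ! i))"
    unfolding op_matrix_def cs_def q_def Let_def ..
  have opd1: "op_matrix N \<alpha> (d+1) = mat p p (\<lambda>(i, j). mul_abs1 N (Ltilde N \<alpha> (monomial_c (bs ! j))) (bs ! i))"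
    unfolding op_matrix_def bs_def p_def Let_def ..
  have AB: "op_matrix N \<alpha> (d+1) = A * B"
  proof (rule eq_matI)
    fix i j assume i: "i < dim_row (A*B)" and j: "j < dim_col (A*B)"
    hence i: "i < p" and j: "j < p" using Ac Bc by auto
    have bj: "bs!j \<in> mono_set N (Suc d)" using bs j unfolding p_def by (metis nth_mem)
    have E: "Ltilde N \<alpha> (monomial_c (bs!j)) =
       (\<lambda>a. \<Sum>x\<in>mono_set N d. Ltilde N \<alpha> (monomial_c (bs!j)) x * monomial_c x a)"
      by (rule expand[OF fin_mono L_homog[OF mono_homog[OF bj]]])
    have "mul_abs1 N (Ltilde N \<alpha> (monomial_c (bs!j))) (bs!i) =
       mul_abs1 N (\<lambda>a. \<Sum>x\<in>mono_set N d. Ltilde N \<alpha> (monomial_c (bs!j)) x * monomial_c x a) (bs!i)"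
      by (rule arg_cong[where f="\<lambda>f. mul_abs1 N f (bs!i)"], rule E)
    also have "\<dots> = (\<Sum>x\<in>mono_set N d. Ltilde N \<alpha> (monomial_c (bs!j)) x * mul_abs1 N (monomial_c x) (bs!i))"
      by (rule lin_M)
    also have "\<dots> = (\<Sum>k\<in>{0..<q}. Ltilde N \<alpha> (monomial_c (bs!j)) (cs!k) * mul_abs1 N (monomial_c (cs!k)) (bs!i))"
      unfolding cs(2)[symmetric] q_def by (rule sum_set_nth[OF cs(1)])
    also have "\<dots> = (A*B) $$ (i,j)"
      using i j Ac Bc unfolding A_def B_def by (auto simp: scalar_prod_def intro!: sum.cong)
    finally show "op_matrix N \<alpha> (d+1) $$ (i,j) = (A*B) $$ (i,j)" unfolding opd1 using i j by simp
  qed (use Ac Bc opd1 in auto)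
  have BA: "B * A = op_matrix N \<alpha> d + c \<cdot>\<^sub>m 1\<^sub>m q"
  proof (rule eq_matI)
    fix i j assume i: "i < dim_row (op_matrix N \<alpha> d + c \<cdot>\<^sub>m 1\<^sub>m q)"
      and j: "j < dim_col (op_matrix N \<alpha> d + c \<cdot>\<^sub>m 1\<^sub>m q)"
    hence i: "i < q" and j: "j < q" unfolding opd by auto
    have cj: "cs!j \<in> mono_set N d" using cs j unfolding q_def by (metis nth_mem)
    have ci: "cs!i \<in> mono_set N d" using cs i unfolding q_def by (metis nth_mem)
    have E: "mul_abs1 N (monomial_c (cs!j)) =
       (\<lambda>a. \<Sum>x\<in>mono_set N (Suc d). mul_abs1 N (monomial_c (cs!j)) x * monomial_c x a)"
      by (rule expand[OF fin_mono M_homog[OF mono_homog[OF cj]]])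
    have "(B*A) $$ (i,j) = (\<Sum>k\<in>{0..<p}. mul_abs1 N (monomial_c (cs!j)) (bs!k) * Ltilde N \<alpha> (monomial_c (bs!k)) (cs!i))"
      using i j Ac Bc unfolding A_def B_def by (auto simp: scalar_prod_def intro!: sum.cong)
    also have "\<dots> = (\<Sum>x\<in>mono_set N (Suc d). mul_abs1 N (monomial_c (cs!j)) x * Ltilde N \<alpha> (monomial_c x) (cs!i))"
      unfolding bs(2)[symmetric] p_def by (rule sum_set_nth[OF bs(1), symmetric])
    also have "\<dots> = Ltilde N \<alpha> (\<lambda>a. \<Sum>x\<in>mono_set N (Suc d). mul_abs1 N (monomial_c (cs!j)) x * monomial_c x a) (cs!i)"
      by (rule lin_L[symmetric])
    also have "\<dots> = Ltilde N \<alpha> (mul_abs1 N (monomial_c (cs!j))) (cs!i)"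
      by (rule arg_cong[where f="\<lambda>f. Ltilde N \<alpha> f (cs!i)"], rule E[symmetric])
    also have "\<dots> = mul_abs1 N (Ltilde N \<alpha> (monomial_c (cs!j))) (cs!i)
        + (2 * (\<Sum>n=1..N. real ((cs!i) n)) + (\<Sum>n=1..N. \<alpha> n)) * monomial_c (cs!j) (cs!i)"
      by (rule commutator)
    also have "(\<Sum>n=1..N. real ((cs!i) n)) = real d"
      using ci unfolding mono_set_def by (simp flip: of_nat_sum)
    also have "monomial_c (cs!j) (cs!i) = (if i = j then 1 else 0)"
      using cs(1) i j unfolding monomial_c_def q_def by (auto simp: nth_eq_iff_index_eq)
    finally show "(B*A) $$ (i,j) = (op_matrix N \<alpha> d + c \<cdot>\<^sub>m 1\<^sub>m q) $$ (i,j)"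
      unfolding opd c_def using i j by simp
  qed (use Ac Bc opd in auto)
  define cA where "cA = map_mat complex_of_real A"
  define cB where "cB = map_mat complex_of_real B"
  define cT where "cT = map_mat complex_of_real (op_matrix N \<alpha> d)"
  have cAc: "cA \<in> carrier_mat p q" and cBc: "cB \<in> carrier_mat q p" and cTc: "cT \<in> carrier_mat q q"
    unfolding cA_def cB_def cT_def using Ac Bc opd by auto
  have e1: "map_mat complex_of_real (op_matrix N \<alpha> (d+1)) = cA * cB"
    unfolding AB cA_def cB_def by (rule of_real_hom.mat_hom_mult[OF Ac Bc])
  have e2: "cB * cA = cT + complex_of_real c \<cdot>\<^sub>m 1\<^sub>m q"
  proof -
    have "cB * cA = map_mat complex_of_real (B * A)"
      unfolding cA_def cB_def by (rule of_real_hom.mat_hom_mult[OF Bc Ac, symmetric])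
    also have "\<dots> = cT + complex_of_real c \<cdot>\<^sub>m 1\<^sub>m q"
      unfolding BA cT_def using opd by (intro eq_matI) auto
    finally show ?thesis .
  qed
  have syl: "char_poly (cA*cB) * [:0,1:]^q = [:0,1:]^p * char_poly (cB*cA)"
    by (rule sylvester[OF cAc cBc])
  have nz1: "char_poly (cA*cB) \<noteq> 0"
    using degree_monic_char_poly[of "cA*cB" p] cAc cBc by auto
  have nz2: "char_poly (cB*cA) \<noteq> 0"
    using degree_monic_char_poly[of "cB*cA" q] cAc cBc by auto
  have X: "proots ([:0,1:]^k :: complex poly) = replicate_mset k 0" for k
    by (simp add: proots_power)
  have "proots (char_poly (cA*cB)) + replicate_mset q 0 = replicate_mset p 0 + proots (char_poly (cB*cA))"
    using arg_cong[OF syl, of proots] nz1 nz2 by (simp add: proots_mult X)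
  also have "replicate_mset p (0::complex) = replicate_mset (p - q) 0 + replicate_mset q 0"
    using pq by (metis le_add_diff_inverse2 replicate_mset_add)
  finally have "proots (char_poly (cA*cB)) = replicate_mset (p - q) 0 + proots (char_poly (cB*cA))"
    by (simp add: add.assoc add.commute add.left_commute)
  also have "proots (char_poly (cB*cA)) = image_mset (\<lambda>s. complex_of_real c + s) (proots (char_poly cT))"
    unfolding e2 by (rule proots_char_poly_shift[OF cTc])
  finally show ?thesis
    unfolding Lambda_tilde_def e1 cT_def[symmetric] c_def[symmetric] pC[symmetric] qC[symmetric]
    by (simp add: add.commute)
qed
end
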